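(* Let $\hat A_1,\dots,\hat A_n\in\mathcal P_m$, $\hat T_{ij}:=\hat A_i^\top\hat A_j$, and let the $T_{ij}$ be generated by the noise model: for $i<j$, $[T_{ij}]_{p,q}=1-Z_{ijpq}^2$ if $[\hat T_{ij}]_{p,q}=1$, $[T_{ij}]_{p,q}=Z_{ijpq}^2$ if $[\hat T_{ij}]_{p,q}=0$, and $T_{ij}=T_{ji}^\top$ for $i>j$, with independent $Z_{ijpq}\sim\mathcal N(0,\eta_{ij})$. Let $\gamma>0$, $\delta>0$, and suppose $n\le m^{\gamma}$, $m\ge 2^{2/(4\gamma+\delta)}$, and $\eta_{ij}\le\min\!\big(\frac1{10},\frac{1}{2(2+4\gamma+\delta)\ln m+2}\big)$ for all $i<j$. Then with probability at least $1-m^{-\delta}$, simultaneously for all $i\ne j$, $\hat T_{ij}$ is the unique maximizer of $\operatorname{tr}(P^\top T_{ij})$ over $P\in\mathcal P_m$ (so the Pairwise Alignment method recovers matrices $P_{ij}=\hat A_i^\top\hat A_j$).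
   Context: $\mathcal P_m$ denotes the set of $m\times m$ permutation matrices; $\mathcal N(0,\eta)$ is the Gaussian with mean $0$ and variance $\eta$. The Pairwise Alignment method sets $P_{ij}=\arg\max_{P\in\mathcal P_m}\operatorname{tr}(P^\top T_{ij})$ for each pair $i,j$. *)

theory Defs
  imports "HOL-Probability.Probability"
begin

text \<open>m x m real matrices are represented as functions nat => nat => real;
  only entries with indices < m are meaningful. Indices run over 0..<m.\<close>

definition mtransp :: "(nat \<Rightarrow> nat \<Rightarrow> real) \<Rightarrow> nat \<Rightarrow> nat \<Rightarrow> real" where
  "mtransp X = (\<lambda>p q. X q p)"

definition mmult :: "nat \<Rightarrow> (nat \<Rightarrow> nat \<Rightarrow> real) \<Rightarrow> (nat \<Rightarrow> nat \<Rightarrow> real) \<Rightarrow> nat \<Rightarrow> nat \<Rightarrow> real" where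
  "mmult m X Y = (\<lambda>p q. \<Sum>k<m. X p k * Y k q)"

definition mtrace :: "nat \<Rightarrow> (nat \<Rightarrow> nat \<Rightarrow> real) \<Rightarrow> real" where
  "mtrace m X = (\<Sum>p<m. X p p)"

definition perm_mats :: "nat \<Rightarrow> (nat \<Rightarrow> nat \<Rightarrow> real) set" where
  "perm_mats m = {P. \<exists>\<sigma>. \<sigma> permutes {..<m} \<and>
      P = (\<lambda>p q. if p < m \<and> q < m \<and> \<sigma> p = q then 1 else 0)}"

definition gauss :: "real \<Rightarrow> real measure" where
  "gauss \<eta> = (if \<eta> = 0 then return borel 0 else density lborel (normal_density 0 (sqrt \<eta>)))"

definition hatT :: "nat \<Rightarrow> (nat \<Rightarrow> nat \<Rightarrow> nat \<Rightarrow> real) \<Rightarrow> nat \<Rightarrow> nat \<Rightarrow> nat \<Rightarrow> nat \<Rightarrow> real" where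
  "hatT m A i j = mmult m (mtransp (A i)) (A j)"

definition noisyT_upper :: "nat \<Rightarrow> (nat \<Rightarrow> nat \<Rightarrow> nat \<Rightarrow> real) \<Rightarrow> (nat \<Rightarrow> nat \<Rightarrow> nat \<Rightarrow> nat \<Rightarrow> real)
    \<Rightarrow> nat \<Rightarrow> nat \<Rightarrow> nat \<Rightarrow> nat \<Rightarrow> real" where
  "noisyT_upper m A z i j p q =
     (if hatT m A i j p q = 1 then 1 - (z i j p q)\<^sup>2 else (z i j p q)\<^sup>2)"

definition noisyT :: "nat \<Rightarrow> (nat \<Rightarrow> nat \<Rightarrow> nat \<Rightarrow> real) \<Rightarrow> (nat \<Rightarrow> nat \<Rightarrow> nat \<Rightarrow> nat \<Rightarrow> real)
    \<Rightarrow> nat \<Rightarrow> nat \<Rightarrow> nat \<Rightarrow> nat \<Rightarrow> real" where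
  "noisyT m A z i j =
     (if i < j then noisyT_upper m A z i j else mtransp (noisyT_upper m A z j i))"

definition unique_maximizer :: "nat \<Rightarrow> (nat \<Rightarrow> nat \<Rightarrow> real) \<Rightarrow> (nat \<Rightarrow> nat \<Rightarrow> real) \<Rightarrow> bool" where
  "unique_maximizer m T P0 \<longleftrightarrow> P0 \<in> perm_mats m \<and>
     (\<forall>P \<in> perm_mats m. P \<noteq> P0 \<longrightarrow>
        mtrace m (mmult m (mtransp P) T) < mtrace m (mmult m (mtransp P0) T))"

end

theory Submission
  imports Defs
begin


lemma even_nn_integral:
  fixes f :: "real \<Rightarrow> ennreal"
  assumes [measurable]: "f \<in> borel_measurable borel" and ev: "\<And>x. f (-x) = f x"
  shows "(\<integral>\<^sup>+x. f x \<partial>lborel) = 2 * (\<integral>\<^sup>+x. f x * indicator {0<..} x \<partial>lborel)"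
proof -
  have "(\<integral>\<^sup>+x. f x \<partial>lborel) = (\<integral>\<^sup>+x. f x * indicator {0<..} x + f x * indicator {..0} x \<partial>lborel)"
    by (intro nn_integral_cong) (auto split: split_indicator)
  also have "\<dots> = (\<integral>\<^sup>+x. f x * indicator {0<..} x \<partial>lborel) + (\<integral>\<^sup>+x. f x * indicator {..0} x \<partial>lborel)"
    by (rule nn_integral_add) auto
  also have "(\<integral>\<^sup>+x. f x * indicator {..0} x \<partial>lborel)
      = (\<integral>\<^sup>+x. f (0 + (-1) * x) * indicator {..0} (0 + (-1)*x) \<partial>lborel)"
    by (subst nn_integral_real_affine[where c="-1" and t=0]) auto
  also have "\<dots> = (\<integral>\<^sup>+x. f x * indicator {0<..} x \<partial>lborel)"
    by (simp, intro nn_integral_cong_AE AE_I[where N="{0}"]) (auto simp: ev split: split_indicator)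
  finally show ?thesis by (simp add: mult_2)
qed

lemma inner_x:
  fixes a t :: real assumes a: "a > 0"
  shows "(\<integral>\<^sup>+x. ennreal (x * (a/pi * exp(-a*(x\<^sup>2+(x* t)\<^sup>2)) * (if 1 \<le> x\<^sup>2+(x* t)\<^sup>2 then 1 else 0))) * indicator {0<..} x \<partial>lborel)
     = ennreal (exp(-a)/(2*pi*(1+t\<^sup>2)))"
proof -
  define r where "r = 1 / sqrt (1+t\<^sup>2)"
  have s1: "1 + t\<^sup>2 > 0" by (simp add: add_pos_nonneg)
  have r: "r > 0" using s1 by (simp add: r_def)
  have rr: "r\<^sup>2 * (1+t\<^sup>2) = 1" using s1 by (simp add: r_def power_divide)
  have key: "\<And>x. x > 0 \<Longrightarrow> (1 \<le> x\<^sup>2+(x* t)\<^sup>2) = (r \<le> x)"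
  proof -
    fix x :: real assume x: "x > 0"
    have "(1 \<le> x\<^sup>2+(x* t)\<^sup>2) = (r\<^sup>2 * (1+t\<^sup>2) \<le> x\<^sup>2 * (1+t\<^sup>2))"
      using rr by (simp add: power_mult_distrib algebra_simps)
    also have "\<dots> = (r\<^sup>2 \<le> x\<^sup>2)" using s1 by simp
    also have "\<dots> = (r \<le> x)" using r x by (simp add: power2_le_iff_abs_le abs_le_iff)
    finally show "(1 \<le> x\<^sup>2+(x* t)\<^sup>2) = (r \<le> x)" .
  qed
  define F where "F x = (-1 / (2*pi*(1+t\<^sup>2))) * exp (-(a*(1+t\<^sup>2))*x\<^sup>2)" for x
  have "(\<integral>\<^sup>+x. ennreal (x * (a/pi * exp(-a*(x\<^sup>2+(x* t)\<^sup>2)) * (if 1 \<le> x\<^sup>2+(x* t)\<^sup>2 then 1 else 0))) * indicator {0<..} x \<partial>lborel)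
     = (\<integral>\<^sup>+x. ennreal (a/pi * x * exp(-(a*(1+t\<^sup>2))*x\<^sup>2)) * indicator {r..} x \<partial>lborel)"
  proof (intro nn_integral_cong)
    fix x :: real
    show "ennreal (x * (a/pi * exp(-a*(x\<^sup>2+(x* t)\<^sup>2)) * (if 1 \<le> x\<^sup>2+(x* t)\<^sup>2 then 1 else 0))) * indicator {0<..} x
       = ennreal (a/pi * x * exp(-(a*(1+t\<^sup>2))*x\<^sup>2)) * indicator {r..} x"
    proof (cases "x > 0")
      case True
      then show ?thesis using key[OF True]
        by (auto simp: indicator_def power_mult_distrib algebra_simps)
    next
      case False
      then show ?thesis using r by (auto simp: indicator_def)
    qed
  qed
  also have "\<dots> = ennreal (0 - F r)"
  proof (rule nn_integral_FTC_atLeast)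
    show "(\<lambda>x. a/pi * x * exp(-(a*(1+t\<^sup>2))*x\<^sup>2)) \<in> borel_measurable borel" by measurable
    fix x :: real assume "r \<le> x"
    then have "x > 0" using r by linarith
    show "0 \<le> a/pi * x * exp(-(a*(1+t\<^sup>2))*x\<^sup>2)" using a \<open>x>0\<close> by simp
    show "(F has_real_derivative a/pi * x * exp(-(a*(1+t\<^sup>2))*x\<^sup>2)) (at x)"
    proof -
      have "((\<lambda>x. exp (-(a*(1+t\<^sup>2))*x\<^sup>2)) has_real_derivative exp (-(a*(1+t\<^sup>2))*x\<^sup>2) * (-(a*(1+t\<^sup>2))*(2*x))) (at x)"
        by (auto intro!: derivative_eq_intros)
      from DERIV_cmult[OF this, of "-1 / (2*pi*(1+t\<^sup>2))"]
      have "(F has_real_derivative (-1 / (2*pi*(1+t\<^sup>2))) * (exp (-(a*(1+t\<^sup>2))*x\<^sup>2) * (-(a*(1+t\<^sup>2))*(2*x)))) (at x)"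
        unfolding F_def .
      moreover have "(-1 / (2*pi*(1+t\<^sup>2))) * (exp (-(a*(1+t\<^sup>2))*x\<^sup>2) * (-(a*(1+t\<^sup>2))*(2*x))) = a/pi * x * exp(-(a*(1+t\<^sup>2))*x\<^sup>2)"
      proof -
        have "\<And>E c::real. c > 0 \<Longrightarrow> (-1 / (2*pi*c)) * (E * (-(a*c)*(2*x))) = a/pi * x * E"
          by (simp add: field_simps)
        from this[OF s1] show ?thesis .
      qed
      ultimately show ?thesis by simp
    qed
  next
    have "((\<lambda>x. exp (-(a*(1+t\<^sup>2))*x\<^sup>2)) \<longlongrightarrow> 0) at_top"
      apply (rule filterlim_compose[OF exp_at_bot])
      apply (rule filterlim_tendsto_neg_mult_at_bot[where c="-(a*(1+t\<^sup>2))"])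
      using a s1 by (auto intro!: filterlim_pow_at_top filterlim_ident simp: mult_pos_pos)
    then have "((\<lambda>x. (-1 / (2*pi*(1+t\<^sup>2))) * exp (-(a*(1+t\<^sup>2))*x\<^sup>2)) \<longlongrightarrow> (-1 / (2*pi*(1+t\<^sup>2))) * 0) at_top"
      by (intro tendsto_intros)
    then show "(F \<longlongrightarrow> 0) at_top" unfolding F_def by simp
  qed
  also have "0 - F r = exp(-a)/(2*pi*(1+t\<^sup>2))"
  proof -
    have "a*(1+t\<^sup>2)*r\<^sup>2 = a*(r\<^sup>2 * (1+t\<^sup>2))" by (simp add: algebra_simps)
    then have "a*(1+t\<^sup>2)*r\<^sup>2 = a" using rr by simp
    then show ?thesis unfolding F_def by simp
  qed
  finally show ?thesis .
qed

lemma outer_t: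
  fixes a :: real
  shows "(\<integral>\<^sup>+t. ennreal (exp(-a)/(2*pi*(1+t\<^sup>2))) * indicator {0<..} t \<partial>lborel) = ennreal (exp(-a)/4)"
proof -
  have "(\<integral>\<^sup>+t. ennreal (exp(-a)/(2*pi*(1+t\<^sup>2))) * indicator {0<..} t \<partial>lborel)
      = (\<integral>\<^sup>+t. ennreal (exp(-a)/(2*pi*(1+t\<^sup>2))) * indicator {0..} t \<partial>lborel)"
    by (intro nn_integral_cong_AE AE_I[where N="{0}"]) (auto split: split_indicator)
  also have "\<dots> = ennreal (exp(-a)/(2*pi) * (pi/2) - exp(-a)/(2*pi) * arctan 0)"
  proof (rule nn_integral_FTC_atLeast)
    show "(\<lambda>t. exp(-a)/(2*pi*(1+t\<^sup>2))) \<in> borel_measurable borel" by measurable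
    fix x :: real
    show "0 \<le> exp(-a)/(2*pi*(1+x\<^sup>2))" by (simp add: add_nonneg_nonneg)
    have "1 + x\<^sup>2 \<noteq> 0" by (smt (verit) zero_le_power2)
    then show "((\<lambda>t. exp(-a)/(2*pi) * arctan t) has_real_derivative exp(-a)/(2*pi*(1+x\<^sup>2))) (at x)"
    proof -
      from DERIV_cmult[OF DERIV_arctan[of x], of "exp(-a)/(2*pi)"]
      have "((\<lambda>t. exp(-a)/(2*pi) * arctan t) has_real_derivative exp(-a)/(2*pi) * inverse (1 + x\<^sup>2)) (at x)" .
      moreover
      have "exp(-a)/(2*pi) * inverse (1 + x\<^sup>2) = exp(-a)/(2*pi*(1+x\<^sup>2))"
        using \<open>1 + x\<^sup>2 \<noteq> 0\<close> by (simp add: field_simps)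
      ultimately show ?thesis by simp
    qed
  next
    show "((\<lambda>t. exp(-a)/(2*pi) * arctan t) \<longlongrightarrow> exp(-a)/(2*pi) * (pi/2)) at_top"
      by (intro tendsto_intros tendsto_arctan_at_top)
  qed
  also have "exp(-a)/(2*pi) * (pi/2) - exp(-a)/(2*pi) * arctan 0 = exp(-a)/4"
    by simp
  finally show ?thesis .
qed

definition gg :: "real \<Rightarrow> real \<Rightarrow> real \<Rightarrow> real" where
  "gg a x y = a/pi * exp(-a*(x\<^sup>2+y\<^sup>2)) * (if 1 \<le> x\<^sup>2+y\<^sup>2 then 1 else 0)"

lemma gg_nonneg: "a \<ge> 0 \<Longrightarrow> gg a x y \<ge> 0"
  by (simp add: gg_def)

lemma gg_measurable[measurable (raw)]:
  assumes [measurable]: "f \<in> borel_measurable M" "g \<in> borel_measurable M"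
  shows "(\<lambda>p. gg a (f p) (g p)) \<in> borel_measurable M"
  unfolding gg_def by measurable

lemma quadrant:
  fixes a :: real assumes a: "a > 0"
  shows "(\<integral>\<^sup>+x. (\<integral>\<^sup>+y. ennreal (gg a x y) * indicator {0<..} y \<partial>lborel) * indicator {0<..} x \<partial>lborel)
     = ennreal (exp(-a)/4)"
proof -
  have step1: "(\<integral>\<^sup>+y. ennreal (gg a x y) * indicator {0<..} y \<partial>lborel)
      = (\<integral>\<^sup>+t. ennreal (x * gg a x (x*t)) * indicator {0<..} t \<partial>lborel)" if x: "x > 0" for x
  proof -
    have "(\<integral>\<^sup>+y. ennreal (gg a x y) * indicator {0<..} y \<partial>lborel)
      = \<bar>x\<bar> * (\<integral>\<^sup>+t. ennreal (gg a x (0 + x*t)) * indicator {0<..} (0 + x*t) \<partial>lborel)"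
      using x by (subst nn_integral_real_affine[where c=x and t=0]) auto
    also have "\<dots> = (\<integral>\<^sup>+t. ennreal x * (ennreal (gg a x (x*t)) * indicator {0<..} t) \<partial>lborel)"
      using x by (subst nn_integral_cmult) (auto simp: zero_less_mult_iff indicator_def)
    also have "\<dots> = (\<integral>\<^sup>+t. ennreal (x * gg a x (x*t)) * indicator {0<..} t \<partial>lborel)"
      using x a by (intro nn_integral_cong) (simp add: ennreal_mult gg_nonneg mult.assoc)
    finally show ?thesis .
  qed
  have "(\<integral>\<^sup>+x. (\<integral>\<^sup>+y. ennreal (gg a x y) * indicator {0<..} y \<partial>lborel) * indicator {0<..} x \<partial>lborel)
     = (\<integral>\<^sup>+x. \<integral>\<^sup>+t. ennreal (x * gg a x (x*t)) * indicator {0<..} t * indicator {0<..} x \<partial>lborel \<partial>lborel)"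
  proof (intro nn_integral_cong)
    fix x :: real
    show "(\<integral>\<^sup>+y. ennreal (gg a x y) * indicator {0<..} y \<partial>lborel) * indicator {0<..} x
       = (\<integral>\<^sup>+t. ennreal (x * gg a x (x*t)) * indicator {0<..} t * indicator {0<..} x \<partial>lborel)"
    proof (cases "x > 0")
      case True
      then show ?thesis using step1[OF True] by (simp add: indicator_def)
    next
      case False
      then show ?thesis by (simp add: indicator_def)
    qed
  qed
  also have "\<dots> = (\<integral>\<^sup>+t. \<integral>\<^sup>+x. ennreal (x * gg a x (x*t)) * indicator {0<..} t * indicator {0<..} x \<partial>lborel \<partial>lborel)"
    by (rule lborel_pair.Fubini'[symmetric]) measurable
  also have "\<dots> = (\<integral>\<^sup>+t. ennreal (exp(-a)/(2*pi*(1+t\<^sup>2))) * indicator {0<..} t \<partial>lborel)"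
  proof (intro nn_integral_cong)
    fix t :: real
    have "(\<integral>\<^sup>+x. ennreal (x * gg a x (x*t)) * indicator {0<..} t * indicator {0<..} x \<partial>lborel)
       = (\<integral>\<^sup>+x. ennreal (x * gg a x (x*t)) * indicator {0<..} x \<partial>lborel) * indicator {0<..} t"
      by (subst nn_integral_multc[symmetric]) (auto intro!: nn_integral_cong simp: mult_ac)
    also have "(\<integral>\<^sup>+x. ennreal (x * gg a x (x*t)) * indicator {0<..} x \<partial>lborel) = ennreal (exp(-a)/(2*pi*(1+t\<^sup>2)))"
      unfolding gg_def using inner_x[OF a, of t] by simp
    finally show "(\<integral>\<^sup>+x. ennreal (x * gg a x (x*t)) * indicator {0<..} t * indicator {0<..} x \<partial>lborel)
       = ennreal (exp(-a)/(2*pi*(1+t\<^sup>2))) * indicator {0<..} t" .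
  qed
  also have "\<dots> = ennreal (exp(-a)/4)" by (rule outer_t)
  finally show ?thesis .
qed

lemma plane:
  fixes a :: real assumes a: "a > 0"
  shows "(\<integral>\<^sup>+x. \<integral>\<^sup>+y. ennreal (gg a x y) \<partial>lborel \<partial>lborel) = ennreal (exp(-a))"
proof -
  have ev: "gg a (-x) y = gg a x y" "gg a x (-y) = gg a x y" for x y
    by (simp_all add: gg_def)
  have "(\<integral>\<^sup>+x. \<integral>\<^sup>+y. ennreal (gg a x y) \<partial>lborel \<partial>lborel)
      = (\<integral>\<^sup>+x. 2 * (\<integral>\<^sup>+y. ennreal (gg a x y) * indicator {0<..} y \<partial>lborel) \<partial>lborel)"
    by (intro nn_integral_cong even_nn_integral) (auto simp: ev)
  also have "\<dots> = 2 * (\<integral>\<^sup>+x. (\<integral>\<^sup>+y. ennreal (gg a x y) * indicator {0<..} y \<partial>lborel) \<partial>lborel)"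
    by (rule nn_integral_cmult) measurable
  also have "(\<integral>\<^sup>+x. (\<integral>\<^sup>+y. ennreal (gg a x y) * indicator {0<..} y \<partial>lborel) \<partial>lborel)
     = 2 * (\<integral>\<^sup>+x. (\<integral>\<^sup>+y. ennreal (gg a x y) * indicator {0<..} y \<partial>lborel) * indicator {0<..} x \<partial>lborel)"
    by (rule even_nn_integral) (auto simp: ev)
  also have "\<dots> = 2 * ennreal (exp(-a)/4)" using quadrant[OF a] by simp
  finally have "(\<integral>\<^sup>+x. \<integral>\<^sup>+y. ennreal (gg a x y) \<partial>lborel \<partial>lborel) = 2 * (2 * ennreal (exp(-a)/4))" .
  also have "\<dots> = ennreal 2 * (ennreal 2 * ennreal (exp(-a)/4))" by simp
  also have "\<dots> = ennreal (exp(-a))"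
    by (simp add: ennreal_mult[symmetric] del: ennreal_numeral)
  finally show ?thesis .
qed

lemma nd_prod:
  fixes \<eta> :: real assumes e: "\<eta> > 0"
  shows "normal_density 0 (sqrt \<eta>) x * normal_density 0 (sqrt \<eta>) y
     = (1/(2*\<eta>))/pi * exp(-(1/(2*\<eta>))*(x\<^sup>2+y\<^sup>2))"
proof -
  have s: "(sqrt \<eta>)\<^sup>2 = \<eta>" using e by simp
  have q: "1 / sqrt (2 * pi * \<eta>) * (1 / sqrt (2 * pi * \<eta>)) = 1 / (2*pi*\<eta>)"
  proof -
    have "sqrt (2 * pi * \<eta>) * sqrt (2 * pi * \<eta>) = 2 * pi * \<eta>" using e by simp
    moreover have "1 / sqrt (2 * pi * \<eta>) * (1 / sqrt (2 * pi * \<eta>)) = 1 / (sqrt (2 * pi * \<eta>) * sqrt (2 * pi * \<eta>))"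
      by simp
    ultimately show ?thesis by simp
  qed
  have "normal_density 0 (sqrt \<eta>) x * normal_density 0 (sqrt \<eta>) y
      = (1 / sqrt (2 * pi * \<eta>) * (1 / sqrt (2 * pi * \<eta>))) * (exp (-x\<^sup>2/(2*\<eta>)) * exp (-y\<^sup>2/(2*\<eta>)))"
    unfolding normal_density_def s by simp
  also have "\<dots> = 1 / (2*pi*\<eta>) * exp (-x\<^sup>2/(2*\<eta>) + -y\<^sup>2/(2*\<eta>))"
    unfolding q mult_exp_exp ..
  also have "\<dots> = (1/(2*\<eta>))/pi * exp(-(1/(2*\<eta>))*(x\<^sup>2+y\<^sup>2))"
    by (simp add: field_simps add_divide_distrib)
  finally show ?thesis .
qed

lemma gauss_pair_tail:
  fixes \<eta> :: real assumes e: "\<eta> > 0"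
  shows "emeasure (gauss \<eta> \<Otimes>\<^sub>M gauss \<eta>) {p. 1 \<le> (fst p)\<^sup>2 + (snd p)\<^sup>2} = ennreal (exp(-1/(2*\<eta>)))"
proof -
  define D where "D = density lborel (\<lambda>x. ennreal (normal_density 0 (sqrt \<eta>) x))"
  have g: "gauss \<eta> = D" using e by (simp add: gauss_def D_def)
  have pD: "prob_space D" unfolding D_def using e by (intro prob_space_normal_density) simp
  have sf: "sigma_finite_measure D"
    using pD by (simp add: prob_space_imp_sigma_finite)
  have dens: "D \<Otimes>\<^sub>M D = density (lborel \<Otimes>\<^sub>M lborel) (\<lambda>(x,y). ennreal (normal_density 0 (sqrt \<eta>) x) * ennreal (normal_density 0 (sqrt \<eta>) y))"
    unfolding D_def
    by (rule pair_measure_density) (auto simp: sf[unfolded D_def] intro: lborel.sigma_finite_measure_axioms)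
  have "emeasure (D \<Otimes>\<^sub>M D) {p. 1 \<le> (fst p)\<^sup>2 + (snd p)\<^sup>2}
     = (\<integral>\<^sup>+p. (\<lambda>(x,y). ennreal (normal_density 0 (sqrt \<eta>) x) * ennreal (normal_density 0 (sqrt \<eta>) y)) p
          * indicator {p. 1 \<le> (fst p)\<^sup>2 + (snd p)\<^sup>2} p \<partial>(lborel \<Otimes>\<^sub>M lborel))"
  proof -
    have "{p \<in> space (borel \<Otimes>\<^sub>M (borel::real measure)). 1 \<le> (fst p)\<^sup>2 + (snd p)\<^sup>2} \<in> sets (borel \<Otimes>\<^sub>M (borel::real measure))" by measurable
    then have "{p. 1 \<le> (fst p)\<^sup>2 + (snd p)\<^sup>2} \<in> sets (borel \<Otimes>\<^sub>M (borel::real measure))" by (simp add: space_pair_measure)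
    then show ?thesis unfolding dens by (subst emeasure_density) auto
  qed
  also have "\<dots> = (\<integral>\<^sup>+p. ennreal (gg (1/(2*\<eta>)) (fst p) (snd p)) \<partial>(lborel \<Otimes>\<^sub>M lborel))"
    by (intro nn_integral_cong) 
       (auto simp: gg_def nd_prod[OF e] ennreal_mult[symmetric] indicator_def)
  also have "\<dots> = (\<integral>\<^sup>+x. \<integral>\<^sup>+y. ennreal (gg (1/(2*\<eta>)) x y) \<partial>lborel \<partial>lborel)"
  proof -
    have "(\<lambda>p. ennreal (gg (1/(2*\<eta>)) (fst p) (snd p))) \<in> borel_measurable (lborel \<Otimes>\<^sub>M lborel)" by measurable
    from lborel.nn_integral_fst[OF this] show ?thesis by simp
  qed
  also have "\<dots> = ennreal (exp(-(1/(2*\<eta>))))"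
    using e by (intro plane) simp
  finally show ?thesis by (simp add: g)
qed




lemma (in prob_space) indep_vars_pair:
  assumes ind: "indep_vars (\<lambda>_. borel) X I" and ab: "a \<in> I" "b \<in> I" "a \<noteq> b"
  shows "indep_var borel (X a) borel (X b)"
proof -
  have "indep_var (PiM {a} (\<lambda>_. borel)) (\<lambda>\<omega>. restrict (\<lambda>i. X i \<omega>) {a}) (PiM {b} (\<lambda>_. borel)) (\<lambda>\<omega>. restrict (\<lambda>i. X i \<omega>) {b})"
    by (rule indep_var_restrict[OF ind]) (use ab in auto)
  then have "indep_var borel ((\<lambda>f. f a) \<circ> (\<lambda>\<omega>. restrict (\<lambda>i. X i \<omega>) {a})) borel ((\<lambda>f. f b) \<circ> (\<lambda>\<omega>. restrict (\<lambda>i. X i \<omega>) {b}))"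
    by (rule indep_var_compose) measurable
  then show ?thesis by (simp add: comp_def)
qed

lemma (in prob_space) pair_tail:
  fixes X Y :: "'a \<Rightarrow> real"
  assumes ind: "indep_var borel X borel Y" and dX: "distr M borel X = gauss \<eta>" and dY: "distr M borel Y = gauss \<eta>"
    and e: "\<eta> > 0"
  shows "prob {\<omega> \<in> space M. 1 \<le> (X \<omega>)\<^sup>2 + (Y \<omega>)\<^sup>2} = exp(-1/(2*\<eta>))"
proof -
  from ind have rX: "random_variable borel X" and rY: "random_variable borel Y"
    and eq: "distr M borel X \<Otimes>\<^sub>M distr M borel Y = distr M (borel \<Otimes>\<^sub>M borel) (\<lambda>x. (X x, Y x))"
    by (simp_all add: indep_var_distribution_eq)
  have S: "{p. 1 \<le> (fst p)\<^sup>2 + (snd p)\<^sup>2} \<in> sets (borel \<Otimes>\<^sub>M (borel::real measure))"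
  proof -
    have "{p \<in> space (borel \<Otimes>\<^sub>M (borel::real measure)). 1 \<le> (fst p)\<^sup>2 + (snd p)\<^sup>2} \<in> sets (borel \<Otimes>\<^sub>M (borel::real measure))" by measurable
    then show ?thesis by (simp add: space_pair_measure)
  qed
  have XY: "(\<lambda>x. (X x, Y x)) \<in> measurable M (borel \<Otimes>\<^sub>M borel)" using rX rY by measurable
  have "emeasure M {\<omega> \<in> space M. 1 \<le> (X \<omega>)\<^sup>2 + (Y \<omega>)\<^sup>2}
      = emeasure M ((\<lambda>x. (X x, Y x)) -` {p. 1 \<le> (fst p)\<^sup>2 + (snd p)\<^sup>2} \<inter> space M)"
    by (intro arg_cong[where f="emeasure M"]) auto
  also have "\<dots> = emeasure (distr M (borel \<Otimes>\<^sub>M borel) (\<lambda>x. (X x, Y x))) {p. 1 \<le> (fst p)\<^sup>2 + (snd p)\<^sup>2}"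
    by (rule emeasure_distr[OF XY S, symmetric])
  also have "\<dots> = emeasure (gauss \<eta> \<Otimes>\<^sub>M gauss \<eta>) {p. 1 \<le> (fst p)\<^sup>2 + (snd p)\<^sup>2}"
    by (simp add: eq[symmetric] dX dY)
  also have "\<dots> = ennreal (exp(-1/(2*\<eta>)))" by (rule gauss_pair_tail[OF e])
  finally show ?thesis by (simp add: emeasure_eq_measure)
qed

lemma (in prob_space) zero_var:
  fixes X :: "'a \<Rightarrow> real"
  assumes rX: "random_variable borel X" and dX: "distr M borel X = gauss 0"
  shows "prob {\<omega> \<in> space M. X \<omega> \<noteq> 0} = 0"
proof -
  have "emeasure M {\<omega> \<in> space M. X \<omega> \<noteq> 0} = emeasure M (X -` (UNIV - {0}) \<inter> space M)"
    by (intro arg_cong[where f="emeasure M"]) auto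
  also have "\<dots> = emeasure (distr M borel X) (UNIV - {0})"
    by (rule emeasure_distr[OF rX, symmetric]) auto
  also have "\<dots> = 0" by (simp add: dX gauss_def)
  finally show ?thesis by (simp add: emeasure_eq_measure)
qed




definition permmat :: "nat \<Rightarrow> (nat \<Rightarrow> nat) \<Rightarrow> nat \<Rightarrow> nat \<Rightarrow> real" where
  "permmat m \<sigma> = (\<lambda>p q. if p < m \<and> q < m \<and> \<sigma> p = q then 1 else 0)"

lemma perm_mats_iff: "P \<in> perm_mats m \<longleftrightarrow> (\<exists>\<sigma>. \<sigma> permutes {..<m} \<and> P = permmat m \<sigma>)"
  by (simp add: perm_mats_def permmat_def)

lemma perm_lt: "\<sigma> permutes {..<m} \<Longrightarrow> k < m \<Longrightarrow> \<sigma> k < m"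
  using permutes_in_image[of \<sigma> "{..<m}" k] by simp

lemma trace_perm:
  assumes s: "\<sigma> permutes {..<m}"
  shows "mtrace m (mmult m (mtransp (permmat m \<sigma>)) T) = (\<Sum>k<m. T k (\<sigma> k))"
proof -
  have "mtrace m (mmult m (mtransp (permmat m \<sigma>)) T) = (\<Sum>p<m. \<Sum>k<m. (if \<sigma> k = p then T k p else 0))"
    unfolding mtrace_def mmult_def mtransp_def permmat_def by (intro sum.cong refl) auto
  also have "\<dots> = (\<Sum>k<m. \<Sum>p<m. (if \<sigma> k = p then T k p else 0))"
    by (rule sum.swap)
  also have "\<dots> = (\<Sum>k<m. T k (\<sigma> k))"
  proof (rule sum.cong[OF refl])
    fix k assume "k \<in> {..<m}"
    then have "\<sigma> k \<in> {..<m}" using s by (simp add: perm_lt)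
    then show "(\<Sum>p<m. (if \<sigma> k = p then T k p else 0)) = T k (\<sigma> k)"
      by (simp add: sum.delta)
  qed
  finally show ?thesis .
qed

lemma permmat_inj:
  assumes "\<sigma> permutes {..<m}" "\<tau> permutes {..<m}" "permmat m \<sigma> = permmat m \<tau>"
  shows "\<sigma> = \<tau>"
proof
  fix k
  show "\<sigma> k = \<tau> k"
  proof (cases "k < m")
    case True
    then have "\<sigma> k < m" using assms(1) by (simp add: perm_lt)
    with True have "permmat m \<sigma> k (\<sigma> k) = 1" by (simp add: permmat_def)
    then have "permmat m \<tau> k (\<sigma> k) = 1" using assms(3) by simp
    then show ?thesis by (simp add: permmat_def split: if_splits)
  next
    case False
    then show ?thesis using assms(1,2) by (simp add: permutes_def)
  qed
qed

lemma unique_max_perm: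
  assumes t: "\<tau> permutes {..<m}"
    and dom: "\<And>k o'. k < m \<Longrightarrow> o' < m \<Longrightarrow> o' \<noteq> \<tau> k \<Longrightarrow> T k o' < T k (\<tau> k)"
  shows "unique_maximizer m T (permmat m \<tau>)"
  unfolding unique_maximizer_def
proof (intro conjI ballI impI)
  show "permmat m \<tau> \<in> perm_mats m" using t by (auto simp: perm_mats_iff)
  fix P assume P: "P \<in> perm_mats m" and ne: "P \<noteq> permmat m \<tau>"
  then obtain \<sigma> where s: "\<sigma> permutes {..<m}" and Pd: "P = permmat m \<sigma>" by (auto simp: perm_mats_iff)
  have "\<sigma> \<noteq> \<tau>" using ne Pd by auto
  then obtain k where k: "\<sigma> k \<noteq> \<tau> k" by auto
  have km: "k < m"
  proof (rule ccontr)
    assume "\<not> k < m"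
    then have "\<sigma> k = k" "\<tau> k = k" using s t by (auto simp: permutes_def)
    with k show False by simp
  qed
  have le: "T j (\<sigma> j) \<le> T j (\<tau> j)" if "j \<in> {..<m}" for j
  proof (cases "\<sigma> j = \<tau> j")
    case False
    have "\<sigma> j < m" using s that by (simp add: perm_lt)
    then show ?thesis using dom[of j "\<sigma> j"] False that by auto
  qed simp
  have lt: "T k (\<sigma> k) < T k (\<tau> k)"
    using dom[of k "\<sigma> k"] k km s by (simp add: perm_lt)
  have "(\<Sum>j<m. T j (\<sigma> j)) < (\<Sum>j<m. T j (\<tau> j))"
    by (rule sum_strict_mono_ex1) (use le lt km in auto)
  then show "mtrace m (mmult m (mtransp P) T) < mtrace m (mmult m (mtransp (permmat m \<tau>)) T)"
    using trace_perm[OF s] trace_perm[OF t] Pd by simp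
qed

lemma mtransp_permmat:
  assumes "\<rho> permutes {..<m}"
  shows "mtransp (permmat m \<rho>) = permmat m (inv \<rho>)"
proof (intro ext)
  fix p q
  show "mtransp (permmat m \<rho>) p q = permmat m (inv \<rho>) p q"
    using assms by (auto simp: mtransp_def permmat_def permutes_inverses permutes_inv_eq)
qed

lemma mult_permmat:
  assumes s: "\<sigma> permutes {..<m}" and r: "\<rho> permutes {..<m}"
  shows "mmult m (mtransp (permmat m \<sigma>)) (permmat m \<rho>) = permmat m (\<rho> \<circ> inv \<sigma>)"
proof (intro ext)
  fix p q
  have "mmult m (mtransp (permmat m \<sigma>)) (permmat m \<rho>) p q
     = (\<Sum>k<m. if k = inv \<sigma> p then (if p < m \<and> q < m \<and> \<rho> k = q then 1 else 0) else 0)"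
    unfolding mmult_def mtransp_def permmat_def
  proof (rule sum.cong[OF refl])
    fix k assume k: "k \<in> {..<m}"
    have "\<sigma> k = p \<longleftrightarrow> k = inv \<sigma> p" using s by (auto simp: permutes_inverses permutes_inv_eq)
    then show "(if k < m \<and> p < m \<and> \<sigma> k = p then 1 else 0) * (if k < m \<and> q < m \<and> \<rho> k = q then 1 else 0)
       = (if k = inv \<sigma> p then (if p < m \<and> q < m \<and> \<rho> k = q then 1 else 0::real) else 0)"
      using k by auto
  qed
  also have "\<dots> = permmat m (\<rho> \<circ> inv \<sigma>) p q"
  proof (cases "p < m")
    case True
    then have "inv \<sigma> p < m" using permutes_inv[OF s] by (simp add: perm_lt)
    then show ?thesis by (simp add: sum.delta permmat_def)
  next
    case False
    then show ?thesis by (simp add: permmat_def)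
  qed
  finally show "mmult m (mtransp (permmat m \<sigma>)) (permmat m \<rho>) p q = permmat m (\<rho> \<circ> inv \<sigma>) p q" .
qed




lemma um_cong:
  assumes "\<And>p q. p < m \<Longrightarrow> q < m \<Longrightarrow> T p q = T' p q"
  shows "unique_maximizer m T P0 = unique_maximizer m T' P0"
proof -
  have "mtrace m (mmult m X T) = mtrace m (mmult m X T')" for X
    unfolding mtrace_def mmult_def using assms by (intro sum.cong refl) auto
  then show ?thesis unfolding unique_maximizer_def by simp
qed

lemma finite_perm_mats: "finite (perm_mats m)"
proof -
  have "perm_mats m = permmat m ` {\<sigma>. \<sigma> permutes {..<m}}"
    by (auto simp: perm_mats_iff)
  then show ?thesis by (simp add: finite_permutations)
qed

lemma um_pred:
  assumes [measurable]: "\<And>p q. (\<lambda>\<omega>. T \<omega> p q) \<in> borel_measurable N"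
  shows "Measurable.pred N (\<lambda>\<omega>. unique_maximizer m (T \<omega>) P0)"
proof -
  have fin: "finite (perm_mats m)" by (rule finite_perm_mats)
  have [measurable]: "(\<lambda>\<omega>. mtrace m (mmult m (mtransp P) (T \<omega>))) \<in> borel_measurable N" for P
    unfolding mtrace_def mmult_def by measurable
  have "Measurable.pred N (\<lambda>\<omega>. \<forall>P\<in>perm_mats m. P \<noteq> P0 \<longrightarrow> mtrace m (mmult m (mtransp P) (T \<omega>)) < mtrace m (mmult m (mtransp P0) (T \<omega>)))"
    by (rule pred_intros_finite(3)[OF fin]) measurable
  then show ?thesis unfolding unique_maximizer_def by measurable
qed

theorem mainTheorem5:
  fixes M :: "'a measure" and n m :: nat and \<gamma> \<delta> :: real
    and A :: "nat \<Rightarrow> nat \<Rightarrow> nat \<Rightarrow> real"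
    and Z :: "nat \<Rightarrow> nat \<Rightarrow> nat \<Rightarrow> nat \<Rightarrow> 'a \<Rightarrow> real"
    and \<eta> :: "nat \<Rightarrow> nat \<Rightarrow> real"
  defines "I \<equiv> {(i, j, p, q). i < j \<and> j < n \<and> p < m \<and> q < m}"
  assumes "prob_space M"
    and A: "\<And>i. i < n \<Longrightarrow> A i \<in> perm_mats m"
    and indep: "prob_space.indep_vars M (\<lambda>_. borel) (\<lambda>(i, j, p, q). Z i j p q) I"
    and distr: "\<And>i j p q. (i, j, p, q) \<in> I \<Longrightarrow> distr M borel (Z i j p q) = gauss (\<eta> i j)"
    and \<gamma>: "\<gamma> > 0" and \<delta>: "\<delta> > 0"
    and n_le: "real n \<le> real m powr \<gamma>"
    and m_ge: "real m \<ge> 2 powr (2 / (4 * \<gamma> + \<delta>))"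
    and \<eta>_nonneg: "\<And>i j. i < j \<Longrightarrow> j < n \<Longrightarrow> \<eta> i j \<ge> 0"
    and \<eta>_le: "\<And>i j. i < j \<Longrightarrow> j < n \<Longrightarrow>
       \<eta> i j \<le> min (1/10) (1 / (2 * (2 + 4 * \<gamma> + \<delta>) * ln (real m) + 2))"
  shows "measure M {\<omega> \<in> space M. \<forall>i<n. \<forall>j<n. i \<noteq> j \<longrightarrow>
            unique_maximizer m (noisyT m A (\<lambda>i j p q. Z i j p q \<omega>) i j) (hatT m A i j)}
         \<ge> 1 - real m powr (- \<delta>)"
proof -
  note I_def = assms(1)
  interpret P: prob_space M by fact
  define c where "c = 2 + 4 * \<gamma> + \<delta>"
  have m1: "real m > 1"
  proof -
    have "(1::real) < 2 powr (2 / (4 * \<gamma> + \<delta>))"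
      using \<gamma> \<delta> by (intro gr_one_powr) auto
    then show ?thesis using m_ge by linarith
  qed
  define sA where "sA i = (SOME \<sigma>. \<sigma> permutes {..<m} \<and> A i = permmat m \<sigma>)" for i
  have sA: "sA i permutes {..<m} \<and> A i = permmat m (sA i)" if "i < n" for i
  proof -
    from A[OF that] obtain \<sigma> where "\<sigma> permutes {..<m} \<and> A i = permmat m \<sigma>" by (auto simp: perm_mats_iff)
    then show ?thesis unfolding sA_def by (rule someI[where P="\<lambda>\<sigma>. \<sigma> permutes {..<m} \<and> A i = permmat m \<sigma>"])
  qed
  define \<rho> where "\<rho> i j = sA j \<circ> inv (sA i)" for i j
  have \<rho>p: "\<rho> i j permutes {..<m}" if "i < n" "j < n" for i j
    unfolding \<rho>_def using sA[OF that(1)] sA[OF that(2)] by (intro permutes_compose permutes_inv) auto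
  have hat: "hatT m A i j = permmat m (\<rho> i j)" if "i < n" "j < n" for i j
    unfolding hatT_def \<rho>_def using sA[OF that(1)] sA[OF that(2)] by (simp add: mult_permmat)
  have \<rho>inv: "\<rho> i j = inv (\<rho> j i)" if "i < n" "j < n" for i j
  proof -
    have bi: "bij (sA i)" "bij (sA j)" using sA[OF that(1)] sA[OF that(2)] permutes_bij by blast+
    have "inv (\<rho> j i) = inv (inv (sA j)) \<circ> inv (sA i)"
      unfolding \<rho>_def using bi by (simp add: o_inv_distrib bij_imp_bij_inv)
    also have "\<dots> = sA j \<circ> inv (sA i)" using bi by (simp add: inv_inv_eq)
    finally show ?thesis unfolding \<rho>_def by simp
  qed
  define Z' where "Z' i j p q \<omega> = (if (i, j, p, q) \<in> I then Z i j p q \<omega> else 0)" for i j p q \<omega>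
  have Zm: "Z i j p q \<in> borel_measurable M" if "(i, j, p, q) \<in> I" for i j p q
    using indep that unfolding P.indep_vars_def by auto
  have Z'm[measurable]: "Z' i j p q \<in> borel_measurable M" for i j p q
  proof -
    have "Z' i j p q = (if (i,j,p,q) \<in> I then Z i j p q else (\<lambda>_. 0))" by (auto simp: Z'_def fun_eq_iff)
    then show ?thesis using Zm[of i j p q] by (cases "(i, j, p, q) \<in> I") simp_all
  qed
  have inI: "(i, j, p, q) \<in> I \<longleftrightarrow> i < j \<and> j < n \<and> p < m \<and> q < m" for i j p q
    unfolding I_def by simp
  define S where "S = {\<omega> \<in> space M. \<forall>i<n. \<forall>j<n. i \<noteq> j \<longrightarrow>
            unique_maximizer m (noisyT m A (\<lambda>i j p q. Z i j p q \<omega>) i j) (hatT m A i j)}"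
  define S' where "S' = {\<omega> \<in> space M. \<forall>i\<in>{..<n}. \<forall>j\<in>{..<n}. i \<noteq> j \<longrightarrow>
            unique_maximizer m (noisyT m A (\<lambda>i j p q. Z' i j p q \<omega>) i j) (hatT m A i j)}"
  have SS': "S = S'"
  proof -
    have "noisyT m A (\<lambda>i j p q. Z i j p q \<omega>) i j p q = noisyT m A (\<lambda>i j p q. Z' i j p q \<omega>) i j p q"
      if "i < n" "j < n" "i \<noteq> j" "p < m" "q < m" for i j p q \<omega>
      using that by (auto simp: noisyT_def noisyT_upper_def mtransp_def Z'_def inI)
    then have eqU: "unique_maximizer m (noisyT m A (\<lambda>i j p q. Z i j p q \<omega>) i j) (hatT m A i j)
       = unique_maximizer m (noisyT m A (\<lambda>i j p q. Z' i j p q \<omega>) i j) (hatT m A i j)"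
      if "i < n" "j < n" "i \<noteq> j" for i j \<omega>
      using that by (intro um_cong) auto
    show ?thesis unfolding S_def S'_def using eqU by auto
  qed
  have S'm: "S' \<in> P.events"
  proof -
    have [measurable]: "(\<lambda>\<omega>. noisyT m A (\<lambda>i j p q. Z' i j p q \<omega>) i j p q) \<in> borel_measurable M" for i j p q
      by (cases "i < j") (simp_all add: noisyT_def noisyT_upper_def mtransp_def)
    have [measurable]: "Measurable.pred M (\<lambda>\<omega>. unique_maximizer m (noisyT m A (\<lambda>i j p q. Z' i j p q \<omega>) i j) (hatT m A i j))" for i j
      by (rule um_pred) measurable
    show ?thesis unfolding S'_def by measurable
  qed

  define Bnd where "Bnd = exp (-1) * real m powr (- c)"
  have Bnd0: "Bnd \<ge> 0" by (simp add: Bnd_def)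
  have lnm: "ln (real m) > 0" using m1 by simp
  have cpos: "c > 0" using \<gamma> \<delta> by (simp add: c_def)
  have tail: "P.prob {\<omega> \<in> space M. 1 \<le> (Z' i j p1 q1 \<omega>)\<^sup>2 + (Z' i j p2 q2 \<omega>)\<^sup>2} \<le> Bnd"
    if a: "(i, j, p1, q1) \<in> I" and b: "(i, j, p2, q2) \<in> I" and ne: "(p1, q1) \<noteq> (p2, q2)" for i j p1 q1 p2 q2
  proof -
    have eqset: "{\<omega> \<in> space M. 1 \<le> (Z' i j p1 q1 \<omega>)\<^sup>2 + (Z' i j p2 q2 \<omega>)\<^sup>2}
        = {\<omega> \<in> space M. 1 \<le> (Z i j p1 q1 \<omega>)\<^sup>2 + (Z i j p2 q2 \<omega>)\<^sup>2}"
      using a b by (simp add: Z'_def)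
    have ind2: "P.indep_var borel ((\<lambda>(i, j, p, q). Z i j p q) (i, j, p1, q1)) borel ((\<lambda>(i, j, p, q). Z i j p q) (i, j, p2, q2))"
      by (rule P.indep_vars_pair[OF indep a b]) (use ne in auto)
    then have ind2': "P.indep_var borel (Z i j p1 q1) borel (Z i j p2 q2)" by simp
    have ij: "i < j" "j < n" using a by (auto simp: inI)
    have [measurable]: "Z i j p1 q1 \<in> borel_measurable M" "Z i j p2 q2 \<in> borel_measurable M"
      using Zm[OF a] Zm[OF b] by auto
    have eta0: "\<eta> i j \<ge> 0" using \<eta>_nonneg ij by auto
    show ?thesis
    proof (cases "\<eta> i j = 0")
      case True
      have "{\<omega> \<in> space M. 1 \<le> (Z i j p1 q1 \<omega>)\<^sup>2 + (Z i j p2 q2 \<omega>)\<^sup>2}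
          \<subseteq> {\<omega> \<in> space M. Z i j p1 q1 \<omega> \<noteq> 0} \<union> {\<omega> \<in> space M. Z i j p2 q2 \<omega> \<noteq> 0}"
        by auto
      then have "P.prob {\<omega> \<in> space M. 1 \<le> (Z i j p1 q1 \<omega>)\<^sup>2 + (Z i j p2 q2 \<omega>)\<^sup>2}
          \<le> P.prob ({\<omega> \<in> space M. Z i j p1 q1 \<omega> \<noteq> 0} \<union> {\<omega> \<in> space M. Z i j p2 q2 \<omega> \<noteq> 0})"
        by (intro P.finite_measure_mono) measurable
      also have "\<dots> \<le> P.prob {\<omega> \<in> space M. Z i j p1 q1 \<omega> \<noteq> 0} + P.prob {\<omega> \<in> space M. Z i j p2 q2 \<omega> \<noteq> 0}"
        by (intro measure_Un_le) measurable
      also have "\<dots> = 0"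
        using P.zero_var[OF Zm[OF a]] P.zero_var[OF Zm[OF b]] distr[OF a] distr[OF b] True by simp
      finally show ?thesis using eqset Bnd0 by simp
    next
      case False
      then have ep: "\<eta> i j > 0" using eta0 by simp
      have "P.prob {\<omega> \<in> space M. 1 \<le> (Z i j p1 q1 \<omega>)\<^sup>2 + (Z i j p2 q2 \<omega>)\<^sup>2} = exp (-1 / (2 * \<eta> i j))"
        by (rule P.pair_tail[OF ind2' distr[OF a] distr[OF b] ep])
      also have "\<dots> \<le> Bnd"
      proof -
        have le: "\<eta> i j \<le> 1 / (2 * c * ln (real m) + 2)" using \<eta>_le[OF ij] by (simp add: c_def)
        have dpos: "2 * c * ln (real m) + 2 > 0" using cpos lnm by (simp add: add_pos_pos)
        have "\<eta> i j * (2 * c * ln (real m) + 2) \<le> 1" using le dpos by (simp add: field_simps)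
        then have "1 + c * ln (real m) \<le> 1 / (2 * \<eta> i j)" using ep by (simp add: field_simps)
        then have "exp (-1 / (2 * \<eta> i j)) \<le> exp (-1 - c * ln (real m))" by simp
        also have "\<dots> = Bnd" unfolding Bnd_def using m1 by (simp add: powr_def exp_diff exp_minus field_simps)
        finally show ?thesis .
      qed
      finally show ?thesis using eqset by simp
    qed
  qed
  define J where "J = {..<n} \<times> {..<n} \<times> {..<m} \<times> {..<m}"
  define BR where "BR = (\<lambda>(i, j, d, o'). {\<omega> \<in> space M. i < j \<and> o' \<noteq> \<rho> i j d \<and> 1 \<le> (Z' i j d (\<rho> i j d) \<omega>)\<^sup>2 + (Z' i j d o' \<omega>)\<^sup>2})"
  define BC where "BC = (\<lambda>(i, j, k, o'). {\<omega> \<in> space M. i < j \<and> o' \<noteq> inv (\<rho> i j) k \<and> 1 \<le> (Z' i j (inv (\<rho> i j) k) k \<omega>)\<^sup>2 + (Z' i j o' k \<omega>)\<^sup>2})"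
  have BRm: "BR x \<in> P.events" for x unfolding BR_def by (cases x) simp
  have BCm: "BC x \<in> P.events" for x unfolding BC_def by (cases x) simp
  have BRp: "P.prob (BR x) \<le> Bnd" if "x \<in> J" for x
  proof -
    obtain i j d o' where x: "x = (i, j, d, o')" by (cases x) auto
    show ?thesis
    proof (cases "i < j \<and> o' \<noteq> \<rho> i j d")
      case True
      have r: "\<rho> i j d < m" using that x \<rho>p[of i j] by (auto simp: J_def perm_lt)
      have "BR x = {\<omega> \<in> space M. 1 \<le> (Z' i j d (\<rho> i j d) \<omega>)\<^sup>2 + (Z' i j d o' \<omega>)\<^sup>2}"
        using True by (simp add: BR_def x)
      also have "P.prob \<dots> \<le> Bnd"
        by (rule tail) (use True that x r in \<open>auto simp: J_def inI\<close>)
      finally show ?thesis .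
    next
      case False
      then have "BR x = {}" by (auto simp: BR_def x)
      then show ?thesis using Bnd0 by simp
    qed
  qed
  have BCp: "P.prob (BC x) \<le> Bnd" if "x \<in> J" for x
  proof -
    obtain i j k o' where x: "x = (i, j, k, o')" by (cases x) auto
    show ?thesis
    proof (cases "i < j \<and> o' \<noteq> inv (\<rho> i j) k")
      case True
      have r: "inv (\<rho> i j) k < m" using that x permutes_inv[OF \<rho>p[of i j]] by (auto simp: J_def perm_lt)
      have "BC x = {\<omega> \<in> space M. 1 \<le> (Z' i j (inv (\<rho> i j) k) k \<omega>)\<^sup>2 + (Z' i j o' k \<omega>)\<^sup>2}"
        using True by (simp add: BC_def x)
      also have "P.prob \<dots> \<le> Bnd"
        by (rule tail) (use True that x r in \<open>auto simp: J_def inI\<close>)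
      finally show ?thesis .
    next
      case False
      then have "BC x = {}" by (auto simp: BC_def x)
      then show ?thesis using Bnd0 by simp
    qed
  qed
  have cover: "space M - S' \<subseteq> (\<Union>x\<in>J. BR x) \<union> (\<Union>x\<in>J. BC x)"
  proof
    fix \<omega> assume \<omega>: "\<omega> \<in> space M - S'"
    show "\<omega> \<in> (\<Union>x\<in>J. BR x) \<union> (\<Union>x\<in>J. BC x)"
    proof (rule ccontr)
      assume nb: "\<omega> \<notin> (\<Union>x\<in>J. BR x) \<union> (\<Union>x\<in>J. BC x)"
      have sp: "\<omega> \<in> space M" using \<omega> by simp
      have nR: "(Z' i j d (\<rho> i j d) \<omega>)\<^sup>2 + (Z' i j d o' \<omega>)\<^sup>2 < 1"
        if "i < j" "j < n" "d < m" "o' < m" "o' \<noteq> \<rho> i j d" for i j d o'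
      proof -
        have "(i, j, d, o') \<in> J" using that by (auto simp: J_def)
        then have "\<omega> \<notin> BR (i, j, d, o')" using nb by blast
        then show ?thesis using that sp by (auto simp: BR_def)
      qed
      have nC: "(Z' i j (inv (\<rho> i j) k) k \<omega>)\<^sup>2 + (Z' i j o' k \<omega>)\<^sup>2 < 1"
        if "i < j" "j < n" "k < m" "o' < m" "o' \<noteq> inv (\<rho> i j) k" for i j k o'
      proof -
        have "(i, j, k, o') \<in> J" using that by (auto simp: J_def)
        then have "\<omega> \<notin> BC (i, j, k, o')" using nb by blast
        then show ?thesis using that sp by (auto simp: BC_def)
      qed
      define zz where "zz = (\<lambda>i j p q. Z' i j p q \<omega>)"
      have "\<omega> \<in> S'" unfolding S'_def
      proof (intro CollectI conjI ballI impI sp)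
        fix i j assume i: "i \<in> {..<n}" and j: "j \<in> {..<n}" and ij: "i \<noteq> j"
        show "unique_maximizer m (noisyT m A (\<lambda>i j p q. Z' i j p q \<omega>) i j) (hatT m A i j)"
        proof (cases "i < j")
          case True
          have rp: "\<rho> i j permutes {..<m}" using \<rho>p i j by auto
          have "unique_maximizer m (noisyT_upper m A zz i j) (permmat m (\<rho> i j))"
          proof (rule unique_max_perm[OF rp])
            fix k o' assume k: "k < m" and o: "o' < m" and ne: "o' \<noteq> \<rho> i j k"
            have rk: "\<rho> i j k < m" using rp k by (simp add: perm_lt)
            have h1: "hatT m A i j k o' \<noteq> 1" using hat[of i j] i j ne by (simp add: permmat_def)
            have h2: "hatT m A i j k (\<rho> i j k) = 1" using hat[of i j] i j k rk by (simp add: permmat_def)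
            show "noisyT_upper m A zz i j k o' < noisyT_upper m A zz i j k (\<rho> i j k)"
              using nR[of i j k o'] True j k o ne h1 h2 by (simp add: noisyT_upper_def zz_def)
          qed
          then show ?thesis using True hat[of i j] i j by (simp add: noisyT_def zz_def)
        next
          case False
          then have ji: "j < i" using ij by simp
          have rp: "\<rho> j i permutes {..<m}" using \<rho>p i j by auto
          have tp: "inv (\<rho> j i) permutes {..<m}" using permutes_inv[OF rp] .
          have "unique_maximizer m (mtransp (noisyT_upper m A zz j i)) (permmat m (inv (\<rho> j i)))"
          proof (rule unique_max_perm[OF tp])
            fix k o' assume k: "k < m" and o: "o' < m" and ne: "o' \<noteq> inv (\<rho> j i) k"
            have rk: "inv (\<rho> j i) k < m" using tp k by (simp add: perm_lt)
            have rr: "\<rho> j i (inv (\<rho> j i) k) = k" using rp by (simp add: permutes_inverses)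
            have ne2: "\<rho> j i o' \<noteq> k"
            proof
              assume "\<rho> j i o' = k"
              then have "inv (\<rho> j i) k = o'" using rp by (auto simp: permutes_inverses)
              with ne show False by simp
            qed
            have h1: "hatT m A j i o' k \<noteq> 1" using hat[of j i] i j ne2 by (simp add: permmat_def)
            have h2: "hatT m A j i (inv (\<rho> j i) k) k = 1" using hat[of j i] i j k rk rr by (simp add: permmat_def)
            show "mtransp (noisyT_upper m A zz j i) k o' < mtransp (noisyT_upper m A zz j i) k (inv (\<rho> j i) k)"
              using nC[of j i k o'] ji i k o ne h1 h2 by (simp add: noisyT_upper_def zz_def mtransp_def)
          qed
          moreover have "hatT m A i j = permmat m (inv (\<rho> j i))" using hat[of i j] \<rho>inv[of i j] i j by simp
          ultimately show ?thesis using False by (simp add: noisyT_def zz_def)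
        qed
      qed
      with \<omega> show False by simp
    qed
  qed
  have finJ: "finite J" by (simp add: J_def)
  have cardJ: "card J = n * n * m * m" by (simp add: J_def card_cartesian_product)
  have "P.prob (space M - S') \<le> P.prob ((\<Union>x\<in>J. BR x) \<union> (\<Union>x\<in>J. BC x))"
    using BRm BCm finJ by (intro P.finite_measure_mono cover) auto
  also have "\<dots> \<le> P.prob (\<Union>x\<in>J. BR x) + P.prob (\<Union>x\<in>J. BC x)"
    using BRm BCm finJ by (intro measure_Un_le) auto
  also have "\<dots> \<le> (\<Sum>x\<in>J. P.prob (BR x)) + (\<Sum>x\<in>J. P.prob (BC x))"
    using BRm BCm finJ by (intro add_mono P.finite_measure_subadditive_finite) auto
  also have "\<dots> \<le> (\<Sum>x\<in>J. Bnd) + (\<Sum>x\<in>J. Bnd)"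
    using BRp BCp by (intro add_mono sum_mono) auto
  also have "\<dots> = 2 * real n * real n * real m * real m * Bnd"
    using cardJ by simp
  also have "\<dots> \<le> real m powr (- \<delta>)"
  proof -
    have mpos: "real m > 0" using m1 by simp
    have nn: "real n * real n \<le> real m powr (2 * \<gamma>)"
    proof -
      have "real n * real n \<le> real m powr \<gamma> * real m powr \<gamma>"
        using n_le by (intro mult_mono) auto
      also have "\<dots> = real m powr (2 * \<gamma>)" by (simp add: powr_add[symmetric])
      finally show ?thesis .
    qed
    have mm: "real m * real m = real m powr 2"
      using mpos by (simp add: powr_numeral power2_eq_square)
    have e2: "2 * exp (-1::real) \<le> 1"
    proof -
      have "(2::real) \<le> exp 1" using exp_ge_add_one_self[of 1] by simp
      then show ?thesis by (simp add: exp_minus field_simps)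
    qed
    have "2 * real n * real n * real m * real m * Bnd
        = (2 * exp (-1)) * ((real n * real n) * (real m * real m) * real m powr (- c))"
      by (simp add: Bnd_def)
    also have "\<dots> \<le> 1 * (real m powr (2 * \<gamma>) * real m powr 2 * real m powr (- c))"
      using e2 nn mm by (intro mult_mono) (auto intro!: mult_right_mono)
    also have "\<dots> = real m powr (- 2 * \<gamma> - \<delta>)"
    proof -
      have "real m powr (2 * \<gamma>) * real m powr 2 * real m powr (- c) = real m powr (2 * \<gamma> + 2 + (- c))"
        by (simp only: powr_add)
      also have "2 * \<gamma> + 2 + (- c) = - 2 * \<gamma> - \<delta>" by (simp add: c_def)
      finally show ?thesis by simp
    qed
    also have "\<dots> \<le> real m powr (- \<delta>)"
      using m1 \<gamma> by (intro powr_mono) auto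
    finally show ?thesis .
  qed
  finally have "P.prob (space M - S') \<le> real m powr (- \<delta>)" .
  then have "P.prob S' \<ge> 1 - real m powr (- \<delta>)" using P.prob_compl[OF S'm] by simp
  then show ?thesis using SS' unfolding S_def by simp
qed


end
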